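(* Let $\mathcal{E}_1$ be a finite multiset of real numbers, let $\epsilon\in(0,\tfrac14]$, and let $q(\mathcal{E}_1,\epsilon)$ be the $\lceil(1+|\mathcal{E}_1|)(1-\epsilon)\rceil$-th smallest element of $\mathcal{E}_1$. Let $\mathcal{E}_2$ be the multiset obtained from $\mathcal{E}_1$ by adding $t_l\ge 2$ elements that are less than or equal to $q(\mathcal{E}_1,\epsilon)$ and $t_r\ge t_l$ elements that are strictly greater than $q(\mathcal{E}_1,\epsilon)$. Then $q(\mathcal{E}_2,\epsilon)\ge q(\mathcal{E}_1,\epsilon)$, where $q(\mathcal{E}_2,\epsilon)$ is the $\lceil(1+|\mathcal{E}_2|)(1-\epsilon)\rceil$-th smallest element of $\mathcal{E}_2$.
   Context: Order statistics of multisets are counted with multiplicity; if the rank index $\lceil(1+|\mathcal{E}|)(1-\epsilon)\rceil$ exceeds $|\mathcal{E}|$, $q(\mathcal{E},\epsilon)$ is taken to be $+\infty$. *)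

theory Defs
  imports Complex_Main "HOL-Library.Multiset" "HOL-Library.Extended_Real"
begin

text \<open>Ranks below 1 (possible only for eps >= 1) are mapped to -infinity by convention.\<close>
definition quant :: "real multiset \<Rightarrow> real \<Rightarrow> ereal" where
  "quant E eps =
     (let k = \<lceil>(1 + real (size E)) * (1 - eps)\<rceil> in
      if k > int (size E) then PInfty
      else if k < 1 then MInfty
      else ereal (sorted_list_of_multiset E ! (nat k - 1)))"

end

theory Submission
  imports Defs
begin

lemma lemA:
  fixes xs :: "real list"
  assumes "sorted xs" "i < length xs" "length (filter (\<lambda>x. x < v) xs) \<le> i"
  shows "v \<le> xs ! i"
proof (rule ccontr)
  assume "\<not> v \<le> xs ! i"
  hence lt: "xs ! i < v" by simp
  have all: "\<forall>x\<in>set (take (Suc i) xs). x < v"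
  proof
    fix x assume "x \<in> set (take (Suc i) xs)"
    then obtain j where j: "j < length (take (Suc i) xs)" "x = take (Suc i) xs ! j"
      by (metis in_set_conv_nth)
    hence "j \<le> i" "x = xs ! j" by auto
    hence "x \<le> xs ! i" using assms(1,2) sorted_nth_mono by blast
    thus "x < v" using lt by simp
  qed
  hence "filter (\<lambda>x. x < v) (take (Suc i) xs) = take (Suc i) xs" by simp
  hence "length (filter (\<lambda>x. x < v) (take (Suc i) xs)) = Suc i" using assms(2) by simp
  moreover have "length (filter (\<lambda>x. x < v) xs) \<ge> length (filter (\<lambda>x. x < v) (take (Suc i) xs))"
    by (metis append_take_drop_id filter_append length_append le_add1)
  ultimately show False using assms(3) by simp
qed

lemma lemB:
  fixes xs :: "real list"
  assumes "sorted xs" "k < length xs" "xs ! k = v"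
  shows "length (filter (\<lambda>x. x < v) xs) \<le> k"
proof -
  have "filter (\<lambda>x. x < v) (drop k xs) = []"
  proof (rule filter_False, rule ballI)
    fix x assume "x \<in> set (drop k xs)"
    then obtain j where j: "j < length (drop k xs)" "x = drop k xs ! j"
      by (metis in_set_conv_nth)
    hence "x = xs ! (k + j)" "k + j < length xs" using assms(2) by auto
    hence "xs ! k \<le> x" using assms(1) sorted_nth_mono by (metis le_add1)
    thus "\<not> x < v" using assms(3) by simp
  qed
  hence "filter (\<lambda>x. x < v) xs = filter (\<lambda>x. x < v) (take k xs)"
    by (metis append_Nil2 append_take_drop_id filter_append)
  thus ?thesis by (metis length_filter_le length_take min.bounded_iff order.trans nat_le_linear)
qed

lemma size_filter_sorted:
  "size (filter_mset P M) = length (filter P (sorted_list_of_multiset M))"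
  by (metis mset_filter mset_sorted_list_of_multiset size_mset)

theorem lemma1:
  fixes E1 L R :: "real multiset" and eps :: real
  assumes "0 < eps" and "eps \<le> 1/4"
    and "size L \<ge> 2" and "size R \<ge> size L"
    and "\<forall>x\<in>#L. ereal x \<le> quant E1 eps"
    and "\<forall>x\<in>#R. ereal x > quant E1 eps"
  shows "quant (E1 + L + R) eps \<ge> quant E1 eps"
proof -
  define n where "n = size E1"
  define k1 where "k1 = \<lceil>(1 + real n) * (1 - eps)\<rceil>"
  define m where "m = size (E1 + L + R)"
  define k2 where "k2 = \<lceil>(1 + real m) * (1 - eps)\<rceil>"
  define l where "l = size L"
  define r where "r = size R"
  have q1: "quant E1 eps = (if k1 > int n then PInfty else if k1 < 1 then MInfty
      else ereal (sorted_list_of_multiset E1 ! (nat k1 - 1)))"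
    unfolding quant_def k1_def n_def Let_def by simp
  have q2: "quant (E1+L+R) eps = (if k2 > int m then PInfty else if k2 < 1 then MInfty
      else ereal (sorted_list_of_multiset (E1+L+R) ! (nat k2 - 1)))"
    unfolding quant_def k2_def m_def Let_def by simp
  have Rne: "R \<noteq> {#}" using assms(3,4) by auto
  then obtain y where y: "y \<in># R" by blast
  have k1n: "\<not> k1 > int n"
  proof
    assume "k1 > int n"
    hence "quant E1 eps = PInfty" using q1 by simp
    thus False using assms(6) y by auto
  qed
  show ?thesis
  proof (cases "k1 < 1")
    case True thus ?thesis using q1 k1n by simp
  next
    case False
    define v where "v = sorted_list_of_multiset E1 ! (nat k1 - 1)"
    have qv: "quant E1 eps = ereal v" using q1 k1n False v_def by simp
    have mdef: "m = n + l + r" unfolding m_def n_def l_def r_def by simp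
    have "real (l + r) * (1 - eps) \<ge> real l"
    proof -
      have "real (l + r) \<ge> 2 * real l" using assms(4) l_def r_def by simp
      moreover have "1 - eps \<ge> 3/4" using assms(2) by simp
      ultimately have "real (l + r) * (1 - eps) \<ge> 2 * real l * (3/4)"
        by (intro mult_mono) auto
      thus ?thesis by simp
    qed
    hence "(1 + real m) * (1 - eps) \<ge> (1 + real n) * (1 - eps) + real l"
      unfolding mdef by (simp add: algebra_simps)
    hence "k2 \<ge> \<lceil>(1 + real n) * (1 - eps) + real l\<rceil>" unfolding k2_def
      by (rule ceiling_mono)
    hence k2k1: "k2 \<ge> k1 + int l" unfolding k1_def
      using ceiling_add_of_int[of "(1 + real n) * (1 - eps)" "int l"] by simp
    show ?thesis
    proof (cases "k2 > int m")
      case True thus ?thesis using q2 by simp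
    next
      case False2: False
      let ?xs = "sorted_list_of_multiset (E1 + L + R)"
      let ?ys = "sorted_list_of_multiset E1"
      have lenys: "length ?ys = n" unfolding n_def
        by (metis mset_sorted_list_of_multiset size_mset)
      have lenxs: "length ?xs = m" unfolding m_def
        by (metis mset_sorted_list_of_multiset size_mset)
      have c1: "size (filter_mset (\<lambda>x. x < v) E1) \<le> nat k1 - 1"
        unfolding size_filter_sorted
        by (rule lemB) (use False k1n lenys v_def in auto)
      have c2: "size (filter_mset (\<lambda>x. x < v) L) \<le> l" unfolding l_def
        by (metis multiset_filter_subset size_mset_mono)
      have c3: "filter_mset (\<lambda>x. x < v) R = {#}"
        using assms(6) qv by (auto simp: filter_mset_eq_mempty_iff)
      have "size (filter_mset (\<lambda>x. x < v) (E1 + L + R)) \<le> nat k1 - 1 + l"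
        using c1 c2 c3 by (metis filter_union_mset size_union size_empty add_0_right add_mono)
      also have "\<dots> \<le> nat k2 - 1" using k2k1 False by linarith
      finally have "length (filter (\<lambda>x. x < v) ?xs) \<le> nat k2 - 1"
        unfolding size_filter_sorted .
      hence "v \<le> ?xs ! (nat k2 - 1)"
        by (intro lemA) (use False2 k2k1 False lenxs in auto)
      thus ?thesis using q2 qv False2 k2k1 False by auto
    qed
  qed
qed

end
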